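(* Let $\Sigma$ be a finitary signature, $X$ a set, and fix $p\in X\cup\Sigma_0$. Then the cpo $\Psi_\Sigma X$ (all $\Sigma$-trees over $X$, ordered by cutting) is a conservative completion of its subposet $\Phi_\Sigma X$ of finite trees. Explicitly, for every continuous map $f\colon\Phi_\Sigma X\to Q$ into a cpo $Q$, the map $\bar f(s)=\bigsqcup_{n\in\mathbb N} f(\partial_n s)$ is the unique continuous map $\Psi_\Sigma X\to Q$ extending $f$.
   Context: A finitary signature is a sequence $\Sigma=(\Sigma_n)_{n\in\mathbb N}$ of sets. A $\Sigma$-tree is an ordered rooted tree, finite or infinite, with nodes labelled in $\bigcup_n\Sigma_n$ such that a node labelled by $\sigma\in\Sigma_n$ has exactly $n$ children (up to isomorphism). A $\Sigma$-tree over $X$ is a $(\Sigma+X)$-tree with elements of $X$ as nullary symbols. $\Psi_\Sigma X$: all $\Sigma$-trees over $X$; $\Phi_\Sigma X$: the finite ones. $\partial_n t$: delete all nodes of height $>n$ and relabel the remaining nodes of height $n$ by $p$. Order by cutting: $s\le s'$ iff $s=s'$ or $s=\partial_n s'$ for some $n$. A map between posets is continuous if it is monotone and preserves all existing directed joins. A conservative completion of a poset $P$ is a cpo $\bar P$ containing $P$ as a subposet closed under all directed joins existing in $P$, such that every continuous map $f\colon P\to Q$ into a cpo $Q$ has a unique continuous extension $\bar f\colon\bar P\to Q$. *)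

theory Defs
  imports Main
begin

(* Labels of Sigma-trees over X: an operation symbol sigma together with its arity n
   (meaning sigma \<in> \<Sigma> n), or a variable x \<in> X (a nullary symbol). *)
type_synonym ('s, 'x) lab = "('s \<times> nat) + 'x"

(* An ordered rooted tree (finite or infinite) is represented canonically by the partial map
   from positions (paths of child indices from the root) to labels. *)
type_synonym ('s, 'x) tree = "nat list \<Rightarrow> ('s, 'x) lab option"

definition is_tree :: "(nat \<Rightarrow> 's set) \<Rightarrow> 'x set \<Rightarrow> ('s, 'x) tree \<Rightarrow> bool" where
  "is_tree \<Sigma> X t \<longleftrightarrow>
     t [] \<noteq> None \<and>
     (\<forall>w i. t (w @ [i]) \<noteq> None \<longrightarrow> t w \<noteq> None) \<and>
     (\<forall>w \<sigma> n. t w = Some (Inl (\<sigma>, n)) \<longrightarrow> \<sigma> \<in> \<Sigma> n \<and> (\<forall>i. t (w @ [i]) \<noteq> None \<longleftrightarrow> i < n)) \<and>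
     (\<forall>w x. t w = Some (Inr x) \<longrightarrow> x \<in> X \<and> (\<forall>i. t (w @ [i]) = None))"

definition trees :: "(nat \<Rightarrow> 's set) \<Rightarrow> 'x set \<Rightarrow> ('s, 'x) tree set" where
  "trees \<Sigma> X = {t. is_tree \<Sigma> X t}"

definition finite_trees :: "(nat \<Rightarrow> 's set) \<Rightarrow> 'x set \<Rightarrow> ('s, 'x) tree set" where
  "finite_trees \<Sigma> X = {t. is_tree \<Sigma> X t \<and> finite (dom t)}"

definition nullary_labels :: "(nat \<Rightarrow> 's set) \<Rightarrow> 'x set \<Rightarrow> ('s, 'x) lab set" where
  "nullary_labels \<Sigma> X = Inr ` X \<union> (\<lambda>\<sigma>. Inl (\<sigma>, 0)) ` \<Sigma> 0"

definition cut :: "('s, 'x) lab \<Rightarrow> nat \<Rightarrow> ('s, 'x) tree \<Rightarrow> ('s, 'x) tree" where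
  "cut p n t = (\<lambda>w. if length w < n then t w
                    else if length w = n then (case t w of None \<Rightarrow> None | Some _ \<Rightarrow> Some p)
                    else None)"

definition cut_le :: "('s, 'x) lab \<Rightarrow> ('s, 'x) tree \<Rightarrow> ('s, 'x) tree \<Rightarrow> bool" where
  "cut_le p s t \<longleftrightarrow> s = t \<or> (\<exists>n. s = cut p n t)"

definition partial_order_on' :: "'a set \<Rightarrow> ('a \<Rightarrow> 'a \<Rightarrow> bool) \<Rightarrow> bool" where
  "partial_order_on' A le \<longleftrightarrow>
     (\<forall>x\<in>A. le x x) \<and>
     (\<forall>x\<in>A. \<forall>y\<in>A. le x y \<and> le y x \<longrightarrow> x = y) \<and>
     (\<forall>x\<in>A. \<forall>y\<in>A. \<forall>z\<in>A. le x y \<and> le y z \<longrightarrow> le x z)"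

definition directed :: "'a set \<Rightarrow> ('a \<Rightarrow> 'a \<Rightarrow> bool) \<Rightarrow> 'a set \<Rightarrow> bool" where
  "directed A le D \<longleftrightarrow> D \<subseteq> A \<and> D \<noteq> {} \<and> (\<forall>x\<in>D. \<forall>y\<in>D. \<exists>z\<in>D. le x z \<and> le y z)"

definition is_join :: "'a set \<Rightarrow> ('a \<Rightarrow> 'a \<Rightarrow> bool) \<Rightarrow> 'a set \<Rightarrow> 'a \<Rightarrow> bool" where
  "is_join A le D j \<longleftrightarrow> j \<in> A \<and> (\<forall>x\<in>D. le x j) \<and> (\<forall>u\<in>A. (\<forall>x\<in>D. le x u) \<longrightarrow> le j u)"

definition cpo :: "'a set \<Rightarrow> ('a \<Rightarrow> 'a \<Rightarrow> bool) \<Rightarrow> bool" where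
  "cpo A le \<longleftrightarrow> partial_order_on' A le \<and> (\<forall>D. directed A le D \<longrightarrow> (\<exists>j. is_join A le D j))"

definition continuous_map :: "'a set \<Rightarrow> ('a \<Rightarrow> 'a \<Rightarrow> bool) \<Rightarrow> 'b set \<Rightarrow> ('b \<Rightarrow> 'b \<Rightarrow> bool)
    \<Rightarrow> ('a \<Rightarrow> 'b) \<Rightarrow> bool" where
  "continuous_map A leA B leB f \<longleftrightarrow>
     f ` A \<subseteq> B \<and>
     (\<forall>x\<in>A. \<forall>y\<in>A. leA x y \<longrightarrow> leB (f x) (f y)) \<and>
     (\<forall>D j. directed A leA D \<and> is_join A leA D j \<longrightarrow> is_join B leB (f ` D) (f j))"

definition closed_under_directed_joins :: "'a set \<Rightarrow> 'a set \<Rightarrow> ('a \<Rightarrow> 'a \<Rightarrow> bool) \<Rightarrow> bool" where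
  "closed_under_directed_joins P Pbar le \<longleftrightarrow>
     (\<forall>D j. directed P le D \<and> is_join P le D j \<longrightarrow> is_join Pbar le D j)"

end

theory Submission
  imports Defs
begin

lemma cut_cut: "cut p m (cut p n t) = cut p (min m n) t"
  by (rule ext) (auto simp: cut_def split: option.splits)

lemma cut_pt: "f w = g w \<Longrightarrow> cut p n f w = cut p n g w"
  by (simp add: cut_def)

lemma cut_le_refl: "cut_le p x x" by (simp add: cut_le_def)

lemma cut_le_trans: "cut_le p x y \<Longrightarrow> cut_le p y z \<Longrightarrow> cut_le p x z"
  unfolding cut_le_def by (auto simp: cut_cut)

lemma cut_le_antisym: "cut_le p x y \<Longrightarrow> cut_le p y x \<Longrightarrow> x = y"
proof -
  assume a: "cut_le p x y" "cut_le p y x"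
  show "x = y"
  proof (cases "x = y")
    case False
    have "\<exists>n. x = cut p n y" using a(1) False unfolding cut_le_def by blast
    moreover have "\<exists>m. y = cut p m x" using a(2) False unfolding cut_le_def by auto
    ultimately obtain n m where nm: "x = cut p n y" "y = cut p m x" by blast
    have "y = cut p m (cut p n y)" using nm by metis
    also have "\<dots> = cut p (min m n) y" by (rule cut_cut)
    finally have e1: "y = cut p (min m n) y" .
    have "x = cut p n (cut p (min m n) y)" using nm(1) e1 by metis
    also have "\<dots> = cut p (min n (min m n)) y" by (rule cut_cut)
    also have "\<dots> = cut p (min m n) y" by (simp add: min.commute)
    finally show ?thesis using e1 by simp
  qed simp
qed

lemma cut_mono_n: "n \<le> m \<Longrightarrow> cut_le p (cut p n s) (cut p m s)"
proof -
  assume "n \<le> m"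
  then have "cut p n (cut p m s) = cut p n s" by (simp add: cut_cut min_absorb1)
  then show ?thesis unfolding cut_le_def by metis
qed

lemma cut_le_cut: "cut_le p (cut p n s) s"
  unfolding cut_le_def by blast

lemma prefix_node:
  assumes "is_tree \<Sigma> X t" "t w \<noteq> None" shows "t (take k w) \<noteq> None"
  using assms(2)
proof (induction w rule: rev_induct)
  case Nil then show ?case by simp
next
  case (snoc i w)
  have "t w \<noteq> None" using snoc.prems assms(1) unfolding is_tree_def by blast
  then show ?case using snoc by (cases "k \<le> length w") auto
qed

lemma cut_ne_deep:
  assumes "cut p n y \<noteq> y" shows "\<exists>w. length w \<ge> n \<and> y w \<noteq> None"
proof -
  obtain w where "cut p n y w \<noteq> y w" using assms by blast
  then have "length w \<ge> n \<and> y w \<noteq> None" by (cases "y w") (auto simp: cut_def split: if_splits)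
  then show ?thesis by blast
qed

lemma cut_unique:
  assumes "is_tree \<Sigma> X y" "a < n" "cut p a y = cut p n y" shows "cut p n y = y"
proof (rule ccontr)
  assume "cut p n y \<noteq> y"
  then obtain w where w: "length w \<ge> n" "y w \<noteq> None" using cut_ne_deep by blast
  let ?v = "take n w"
  have "y ?v \<noteq> None" using prefix_node[OF assms(1) w(2)] .
  moreover have "length ?v = n" using w by simp
  ultimately have "cut p n y ?v = Some p" by (auto simp: cut_def split: option.splits)
  moreover have "cut p a y ?v = None" using \<open>length ?v = n\<close> assms(2) by (simp add: cut_def)
  ultimately show False using assms(3) by simp
qed

lemma finite_children:
  assumes "is_tree \<Sigma> X t" shows "finite {i. t (w @ [i]) \<noteq> None}"
proof (cases "t w")
  case None
  then have "{i. t (w @ [i]) \<noteq> None} = {}" using assms unfolding is_tree_def by blast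
  then show ?thesis by simp
next
  case (Some l)
  show ?thesis
  proof (cases l)
    case (Inl a)
    obtain \<sigma> k where "a = (\<sigma>, k)" by fastforce
    then have "{i. t (w @ [i]) \<noteq> None} = {..<k}" using assms Some Inl unfolding is_tree_def by blast
    then show ?thesis by simp
  next
    case (Inr x)
    then have "{i. t (w @ [i]) \<noteq> None} = {}" using assms Some unfolding is_tree_def by auto
    then show ?thesis by simp
  qed
qed

lemma finite_levels:
  assumes "is_tree \<Sigma> X t" shows "finite {w. length w \<le> n \<and> t w \<noteq> None}"
proof (induction n)
  case 0
  have "{w. length w \<le> 0 \<and> t w \<noteq> None} \<subseteq> {[]}" by auto
  then show ?case using finite_subset by blast
next
  case (Suc n)
  let ?A = "{w. length w \<le> n \<and> t w \<noteq> None}"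
  have "{w. length w \<le> Suc n \<and> t w \<noteq> None} \<subseteq>
        ?A \<union> (\<lambda>(w,i). w @ [i]) ` (SIGMA w:?A. {i. t (w @ [i]) \<noteq> None})"
  proof
    fix v assume v: "v \<in> {w. length w \<le> Suc n \<and> t w \<noteq> None}"
    show "v \<in> ?A \<union> (\<lambda>(w,i). w @ [i]) ` (SIGMA w:?A. {i. t (w @ [i]) \<noteq> None})"
    proof (cases "length v \<le> n")
      case True then show ?thesis using v by auto
    next
      case False
      then have "v \<noteq> []" by auto
      then have vv: "v = butlast v @ [last v]" by simp
      have tv: "t (butlast v @ [last v]) \<noteq> None" using v vv[symmetric] by simp
      then have "t (butlast v) \<noteq> None" using assms unfolding is_tree_def by blast
      moreover have "length (butlast v) \<le> n" using v by auto
      ultimately have "(butlast v, last v) \<in> (SIGMA w:?A. {i. t (w @ [i]) \<noteq> None})"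
        using tv by simp
      then have "(\<lambda>(w,i). w @ [i]) (butlast v, last v) \<in> (\<lambda>(w,i). w @ [i]) ` (SIGMA w:?A. {i. t (w @ [i]) \<noteq> None})"
        by (rule imageI)
      then show ?thesis using vv[symmetric] by simp
    qed
  qed
  moreover have "finite (SIGMA w:?A. {i. t (w @ [i]) \<noteq> None})"
    using Suc finite_children[OF assms] by blast
  ultimately show ?case using Suc by (meson finite_Un finite_imageI finite_subset)
qed

lemma cut_finite_tree:
  assumes "p \<in> nullary_labels \<Sigma> X" "t \<in> trees \<Sigma> X"
  shows "cut p n t \<in> finite_trees \<Sigma> X"
proof -
  have T: "is_tree \<Sigma> X t" using assms(2) by (simp add: trees_def)
  have P: "(\<exists>x\<in>X. p = Inr x) \<or> (\<exists>\<sigma>\<in>\<Sigma> 0. p = Inl (\<sigma>, 0))"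
    using assms(1) by (auto simp: nullary_labels_def)
  have "is_tree \<Sigma> X (cut p n t)"
    unfolding is_tree_def
  proof (intro conjI allI impI)
    show "cut p n t [] \<noteq> None" using T by (auto simp: cut_def is_tree_def split: option.splits)
  next
    fix w i assume "cut p n t (w @ [i]) \<noteq> None"
    then show "cut p n t w \<noteq> None" using T
      by (auto simp: cut_def is_tree_def split: if_splits option.splits)
  next
    fix w \<sigma> k assume a: "cut p n t w = Some (Inl (\<sigma>, k))"
    show "\<sigma> \<in> \<Sigma> k"
      using a T P by (auto simp: cut_def is_tree_def split: if_splits option.splits)
    fix i
    show "(cut p n t (w @ [i]) \<noteq> None) = (i < k)"
    proof (cases "length w < n")
      case True
      then have "t w = Some (Inl (\<sigma>, k))" using a by (simp add: cut_def)
      then have "(t (w @ [i]) \<noteq> None) = (i < k)" using T by (simp add: is_tree_def)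
      moreover have "(cut p n t (w @ [i]) \<noteq> None) = (t (w @ [i]) \<noteq> None)"
        using True by (auto simp: cut_def split: option.splits)
      ultimately show ?thesis by simp
    next
      case False
      then have "length w = n" "p = Inl (\<sigma>, k)" using a
        by (auto simp: cut_def split: if_splits option.splits)
      then show ?thesis using P by (auto simp: cut_def)
    qed
  next
    fix w x assume a: "cut p n t w = Some (Inr x)"
    show "x \<in> X"
      using a T P by (auto simp: cut_def is_tree_def split: if_splits option.splits)
    fix i
    show "cut p n t (w @ [i]) = None"
    proof (cases "length w < n")
      case True
      then have "t w = Some (Inr x)" using a by (simp add: cut_def)
      then have "t (w @ [i]) = None" using T by (simp add: is_tree_def)
      then show ?thesis by (simp add: cut_def)
    next
      case False
      then show ?thesis using a by (auto simp: cut_def split: if_splits option.splits)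
    qed
  qed
  moreover have "dom (cut p n t) \<subseteq> {w. length w \<le> n \<and> t w \<noteq> None}"
    by (auto simp: cut_def split: if_splits option.splits)
  ultimately show ?thesis using finite_levels[OF T, of n] finite_subset
    by (auto simp: finite_trees_def)
qed

lemma finite_cut_id:
  assumes "is_tree \<Sigma> X j" "finite (dom j)"
  shows "\<exists>N. \<forall>n\<ge>N. cut p n j = j"
proof -
  define N where "N = Suc (Max (length ` dom j))"
  have "\<forall>w\<in>dom j. length w < N"
    using assms(2) unfolding N_def by (simp add: le_imp_less_Suc)
  have "cut p n j = j" if n: "n \<ge> N" for n
  proof
    fix w
    show "cut p n j w = j w"
    proof (cases "j w")
      case None then show ?thesis by (simp add: cut_def)
    next
      case (Some l)
      then have "length w < N" using \<open>\<forall>w\<in>dom j. length w < N\<close> by blast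
      then show ?thesis using n by (simp add: cut_def)
    qed
  qed
  then have "\<forall>n\<ge>N. cut p n j = j" by blast
  then show ?thesis by blast
qed


definition has_max :: "('s,'x) lab \<Rightarrow> ('s,'x) tree set \<Rightarrow> bool" where
  "has_max p D \<longleftrightarrow> (\<exists>m\<in>D. \<forall>d\<in>D. cut_le p d m)"

definition lvl :: "('s,'x) lab \<Rightarrow> ('s,'x) tree set \<Rightarrow> ('s,'x) tree \<Rightarrow> nat \<Rightarrow> bool" where
  "lvl p D x n \<longleftrightarrow> (\<exists>y\<in>D. x = cut p n y \<and> x \<noteq> y)"

definition lim :: "('s,'x) lab \<Rightarrow> ('s,'x) tree set \<Rightarrow> ('s,'x) tree" where
  "lim p D = (\<lambda>w. SOME v. \<exists>x\<in>D. \<exists>n. lvl p D x n \<and> length w < n \<and> x w = v)"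

lemma nomax_level:
  assumes "directed A (cut_le p) D" "\<not> has_max p D" "x \<in> D"
  shows "\<exists>n. lvl p D x n"
proof -
  obtain y where y: "y \<in> D" "\<not> cut_le p y x" using assms(2,3) unfolding has_max_def by blast
  obtain z where z: "z \<in> D" "cut_le p x z" "cut_le p y z"
    using assms(1,3) y(1) unfolding directed_def by blast
  have "x \<noteq> z" using z y by blast
  then obtain n where "x = cut p n z" using z(2) unfolding cut_le_def by blast
  then show ?thesis unfolding lvl_def using z(1) \<open>x \<noteq> z\<close> by blast
qed

lemma levels_unbounded:
  assumes "directed A (cut_le p) D" "\<not> has_max p D"
  shows "\<exists>x\<in>D. \<exists>n\<ge>k. lvl p D x n"
proof (induction k)
  case 0
  obtain x where "x \<in> D" using assms(1) unfolding directed_def by blast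
  moreover obtain n where "lvl p D x n" using nomax_level[OF assms \<open>x \<in> D\<close>] by blast
  ultimately show ?case by (intro bexI[of _ x] exI[of _ n]) simp_all
next
  case (Suc k)
  then obtain x n where x: "x \<in> D" "n \<ge> k" "lvl p D x n" by blast
  then obtain y where y: "y \<in> D" "x = cut p n y" "x \<noteq> y" unfolding lvl_def by blast
  obtain m where m: "lvl p D y m" using nomax_level[OF assms y(1)] by blast
  then obtain z where z: "z \<in> D" "y = cut p m z" "y \<noteq> z" unfolding lvl_def by blast
  have "m > n"
  proof (rule ccontr)
    assume "\<not> m > n"
    then have "x = cut p m z" using y z by (simp add: cut_cut min_absorb2)
    then show False using y z by simp
  qed
  then have "m \<ge> Suc k" using x(2) by simp
  then show ?case using y(1) m by blast
qed

lemma L0: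
  assumes "cut_le p y u" "x = cut p n y" "x \<noteq> y"
  shows "x = cut p n u"
proof (cases "y = u")
  case True then show ?thesis using assms by simp
next
  case False
  then obtain m where m: "y = cut p m u" using assms(1) unfolding cut_le_def by blast
  have "x = cut p (min n m) u" using assms(2) m by (simp add: cut_cut)
  moreover have "\<not> m \<le> n"
  proof
    assume "m \<le> n"
    then have "x = y" using assms(2) m by (simp add: cut_cut min_absorb2)
    then show False using assms(3) by simp
  qed
  ultimately show ?thesis by (simp add: min_absorb1)
qed

lemma L:
  assumes "lvl p D x n" "\<forall>d\<in>D. cut_le p d u"
  shows "x = cut p n u"
  using assms L0 unfolding lvl_def by blast

lemma S:
  assumes D: "directed (trees \<Sigma> X) (cut_le p) D" and x: "x \<in> D" "lvl p D x n"
    and z: "z \<in> D" "cut_le p x z"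
  shows "x = cut p n z"
proof -
  obtain y where y: "y \<in> D" "x = cut p n y" "x \<noteq> y" using x unfolding lvl_def by blast
  obtain v where v: "v \<in> D" "cut_le p y v" "cut_le p z v"
    using D y(1) z(1) unfolding directed_def by blast
  have vT: "is_tree \<Sigma> X v" using D v(1) unfolding directed_def trees_def by blast
  have xv: "x = cut p n v" using L0[OF v(2) y(2,3)] .
  show ?thesis
  proof (cases "z = v")
    case True then show ?thesis using xv by simp
  next
    case False
    then obtain m where m: "z = cut p m v" using v(3) unfolding cut_le_def by blast
    show ?thesis
    proof (cases "n \<le> m")
      case True then show ?thesis using xv m by (simp add: cut_cut min_absorb1)
    next
      case False
      show ?thesis
      proof (cases "x = z")
        case True
        have "cut p n z = cut p n (cut p n v)" using xv True by simp
        also have "\<dots> = cut p n v" by (simp add: cut_cut)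
        finally show ?thesis using xv by simp
      next
        case xz: False
        then obtain k where k: "x = cut p k z" using z(2) unfolding cut_le_def by blast
        then have "cut p (min k m) v = cut p n v" using m xv by (simp add: cut_cut)
        moreover have "min k m < n" using False by simp
        ultimately have "cut p n v = v" using cut_unique[OF vT, of "min k m" n p] by simp
        then have "x = v" using xv by simp
        then have "cut_le p y x" using v(2) by simp
        moreover have "cut_le p x y" using y(2) cut_le_cut[of p n y] by simp
        ultimately show ?thesis using cut_le_antisym y(3) by blast
      qed
    qed
  qed
qed

lemma lim_eq:
  assumes D: "directed (trees \<Sigma> X) (cut_le p) D" and x: "x \<in> D" "lvl p D x n" "length w < n"
  shows "lim p D w = x w"
proof -
  have "\<exists>v. \<exists>x\<in>D. \<exists>n. lvl p D x n \<and> length w < n \<and> x w = v" using x by blast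
  then have "\<exists>x\<in>D. \<exists>n. lvl p D x n \<and> length w < n \<and> x w = lim p D w"
    unfolding lim_def by (rule someI_ex)
  then obtain x' n' where x': "x' \<in> D" "lvl p D x' n'" "length w < n'" "x' w = lim p D w" by blast
  obtain z where z: "z \<in> D" "cut_le p x z" "cut_le p x' z"
    using D x(1) x'(1) unfolding directed_def by blast
  have "x = cut p n z" using S[OF D x(1,2) z(1,2)] .
  moreover have "x' = cut p n' z" using S[OF D x'(1,2) z(1,3)] .
  ultimately show ?thesis using x(3) x'(3,4) by (simp add: cut_def)
qed

lemma lim_agree:
  assumes D: "directed (trees \<Sigma> X) (cut_le p) D" "\<not> has_max p D"
  shows "\<exists>x\<in>D. \<exists>n>k. lvl p D x n \<and> (\<forall>w. length w \<le> k \<longrightarrow> lim p D w = x w)"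
proof -
  obtain x n where x: "x \<in> D" "n \<ge> Suc k" "lvl p D x n" using levels_unbounded[OF D] by blast
  have "n > k" using x(2) by simp
  moreover have "\<forall>w. length w \<le> k \<longrightarrow> lim p D w = x w"
    using lim_eq[OF D(1) x(1,3)] \<open>n > k\<close> by simp
  ultimately show ?thesis using x(1,3) by blast
qed

lemma local_tree:
  assumes "\<forall>k. \<exists>s. is_tree \<Sigma> X s \<and> (\<forall>w. length w \<le> k \<longrightarrow> t w = s w)"
  shows "is_tree \<Sigma> X t"
  unfolding is_tree_def
proof (intro conjI allI impI)
  obtain s where s: "is_tree \<Sigma> X s" "\<forall>w. length w \<le> 0 \<longrightarrow> t w = s w" using assms by blast
  then show "t [] \<noteq> None" by (simp add: is_tree_def)
next
  fix w i assume a: "t (w @ [i]) \<noteq> None"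
  obtain s where s: "is_tree \<Sigma> X s" "\<forall>v. length v \<le> Suc (length w) \<longrightarrow> t v = s v" using assms by blast
  have "t w = s w" "t (w @ [i]) = s (w @ [i])" using s(2) by auto
  then have "s (w @ [i]) \<noteq> None" using a by simp
  then have "s w \<noteq> None" using s(1) unfolding is_tree_def by blast
  then show "t w \<noteq> None" using \<open>t w = s w\<close> by simp
next
  fix w \<sigma> n assume a: "t w = Some (Inl (\<sigma>, n))"
  obtain s where s: "is_tree \<Sigma> X s" "\<forall>v. length v \<le> Suc (length w) \<longrightarrow> t v = s v" using assms by blast
  have e: "t w = s w" "\<And>i. t (w @ [i]) = s (w @ [i])" using s(2) by auto
  have sw: "s w = Some (Inl (\<sigma>, n))" using a e by simp
  then show "\<sigma> \<in> \<Sigma> n" using s(1) unfolding is_tree_def by blast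
  fix i
  have "(s (w @ [i]) \<noteq> None) = (i < n)" using s(1) sw unfolding is_tree_def by blast
  then show "(t (w @ [i]) \<noteq> None) = (i < n)" using e by simp
next
  fix w x assume a: "t w = Some (Inr x)"
  obtain s where s: "is_tree \<Sigma> X s" "\<forall>v. length v \<le> Suc (length w) \<longrightarrow> t v = s v" using assms by blast
  have e: "t w = s w" "\<And>i. t (w @ [i]) = s (w @ [i])" using s(2) by auto
  have sw: "s w = Some (Inr x)" using a e by simp
  then show "x \<in> X" using s(1) unfolding is_tree_def by blast
  fix i
  have "s (w @ [i]) = None" using s(1) sw unfolding is_tree_def by blast
  then show "t (w @ [i]) = None" using e by simp
qed

lemma lim_tree:
  assumes D: "directed (trees \<Sigma> X) (cut_le p) D" "\<not> has_max p D"
  shows "lim p D \<in> trees \<Sigma> X"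
proof -
  have "\<forall>k. \<exists>s. is_tree \<Sigma> X s \<and> (\<forall>w. length w \<le> k \<longrightarrow> lim p D w = s w)"
  proof
    fix k
    obtain x n where "x \<in> D" "\<forall>w. length w \<le> k \<longrightarrow> lim p D w = x w"
      using lim_agree[OF D, of k] by blast
    moreover have "is_tree \<Sigma> X x" using D(1) \<open>x \<in> D\<close> unfolding directed_def trees_def by blast
    ultimately show "\<exists>s. is_tree \<Sigma> X s \<and> (\<forall>w. length w \<le> k \<longrightarrow> lim p D w = s w)" by blast
  qed
  then show ?thesis using local_tree unfolding trees_def by blast
qed

lemma lim_upper:
  assumes D: "directed (trees \<Sigma> X) (cut_le p) D" "\<not> has_max p D" and x: "x \<in> D"
  shows "cut_le p x (lim p D)"
proof -
  obtain n where n: "lvl p D x n" using nomax_level[OF D x] by blast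
  have "x = cut p n (lim p D)"
  proof
    fix w :: "nat list"
    obtain x' n' where x': "x' \<in> D" "n' > max n (length w)" "lvl p D x' n'"
      "\<forall>v. length v \<le> max n (length w) \<longrightarrow> lim p D v = x' v"
      using lim_agree[OF D, of "max n (length w)"] by blast
    obtain z where z: "z \<in> D" "cut_le p x z" "cut_le p x' z"
      using D x x'(1) unfolding directed_def by blast
    have xz: "x = cut p n z" using S[OF D(1) x n z(1,2)] .
    have x'z: "x' = cut p n' z" using S[OF D(1) x'(1,3) z(1,3)] .
    have "lim p D w = z w" using x'(2,4) x'z by (simp add: cut_def)
    then have "cut p n z w = cut p n (lim p D) w" by (rule cut_pt[symmetric])
    then show "x w = cut p n (lim p D) w" using xz by simp
  qed
  then show ?thesis using cut_le_cut[of p n "lim p D"] by simp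
qed

lemma upper_unique:
  assumes D: "directed A (cut_le p) D" "\<not> has_max p D"
    and u: "\<forall>d\<in>D. cut_le p d u" and u': "\<forall>d\<in>D. cut_le p d u'"
  shows "u = u'"
proof
  fix w :: "nat list"
  obtain x n where x: "x \<in> D" "n \<ge> Suc (length w)" "lvl p D x n"
    using levels_unbounded[OF D] by blast
  have "x = cut p n u" using L[OF x(3) u] .
  moreover have "x = cut p n u'" using L[OF x(3) u'] .
  moreover have lw: "length w < n" using x(2) by simp
  have "u w = cut p n u w" using lw by (simp add: cut_def)
  moreover have "u' w = cut p n u' w" using lw by (simp add: cut_def)
  ultimately show "u w = u' w" by simp
qed

lemma max_join:
  assumes "directed A (cut_le p) D" "m \<in> D" "\<forall>d\<in>D. cut_le p d m"
  shows "is_join A (cut_le p) D m"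
  using assms unfolding is_join_def directed_def by blast

lemma trees_cpo:
  shows "cpo (trees \<Sigma> X) (cut_le p)"
  unfolding cpo_def
proof (intro conjI allI impI)
  show "partial_order_on' (trees \<Sigma> X) (cut_le p)"
    unfolding partial_order_on'_def using cut_le_refl cut_le_antisym cut_le_trans by blast
next
  fix D assume D: "directed (trees \<Sigma> X) (cut_le p) D"
  show "\<exists>j. is_join (trees \<Sigma> X) (cut_le p) D j"
  proof (cases "has_max p D")
    case True then show ?thesis using max_join[OF D] unfolding has_max_def by blast
  next
    case False
    have "is_join (trees \<Sigma> X) (cut_le p) D (lim p D)"
      unfolding is_join_def
    proof (intro conjI ballI impI)
      show "lim p D \<in> trees \<Sigma> X" using lim_tree[OF D False] .
      show "\<And>x. x \<in> D \<Longrightarrow> cut_le p x (lim p D)" using lim_upper[OF D False] .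
      fix u assume "u \<in> trees \<Sigma> X" "\<forall>x\<in>D. cut_le p x u"
      then have "lim p D = u" using upper_unique[OF D False] lim_upper[OF D False] by blast
      then show "cut_le p (lim p D) u" using cut_le_refl[of p u] by simp
    qed
    then show ?thesis by blast
  qed
qed


lemma cont_into: "continuous_map A leA B leB f \<Longrightarrow> x \<in> A \<Longrightarrow> f x \<in> B"
  unfolding continuous_map_def by blast
lemma cont_mono: "continuous_map A leA B leB f \<Longrightarrow> x \<in> A \<Longrightarrow> y \<in> A \<Longrightarrow> leA x y \<Longrightarrow> leB (f x) (f y)"
  unfolding continuous_map_def by blast
lemma cont_join: "continuous_map A leA B leB f \<Longrightarrow> directed A leA D \<Longrightarrow> is_join A leA D j \<Longrightarrow> is_join B leB (f ` D) (f j)"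
  unfolding continuous_map_def by blast

lemma F_sub_T: "finite_trees \<Sigma> X \<subseteq> trees \<Sigma> X"
  unfolding finite_trees_def trees_def by blast

lemma directed_mono: "directed A le D \<Longrightarrow> A \<subseteq> B \<Longrightarrow> directed B le D"
  unfolding directed_def by blast

lemma join_in_D:
  assumes D: "directed A (cut_le p) D" "is_join A (cut_le p) D j" "has_max p D"
  shows "j \<in> D"
proof -
  obtain m where m: "m \<in> D" "\<forall>d\<in>D. cut_le p d m" using assms(3) unfolding has_max_def by blast
  have "m \<in> A" using D(1) m(1) unfolding directed_def by blast
  then have "cut_le p j m" using D(2) m unfolding is_join_def by blast
  moreover have "cut_le p m j" using D(2) m(1) unfolding is_join_def by blast
  ultimately have "j = m" by (rule cut_le_antisym)
  then show ?thesis using m(1) by simp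
qed

lemma K:
  assumes D: "directed A (cut_le p) D" "is_join A (cut_le p) D j"
  shows "\<exists>x\<in>D. cut p n j = cut p n x"
proof (cases "has_max p D")
  case True then show ?thesis using join_in_D[OF D True] by blast
next
  case False
  obtain x k where x: "x \<in> D" "k \<ge> n" "lvl p D x k" using levels_unbounded[OF D(1) False] by blast
  have "\<forall>d\<in>D. cut_le p d j" using D(2) unfolding is_join_def by blast
  then have "x = cut p k j" using L[OF x(3)] by blast
  then have "cut p n x = cut p n j" using x(2) by (simp add: cut_cut min_absorb1)
  then show ?thesis using x(1) by (intro bexI[of _ x]) simp_all
qed

lemma closure:
  "closed_under_directed_joins (finite_trees \<Sigma> X) (trees \<Sigma> X) (cut_le p)"
  unfolding closed_under_directed_joins_def
proof (intro allI impI, elim conjE)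
  fix D j assume D: "directed (finite_trees \<Sigma> X) (cut_le p) D"
    and j: "is_join (finite_trees \<Sigma> X) (cut_le p) D j"
  have DT: "directed (trees \<Sigma> X) (cut_le p) D" using directed_mono[OF D F_sub_T] .
  show "is_join (trees \<Sigma> X) (cut_le p) D j"
  proof (cases "has_max p D")
    case True
    have "j \<in> D" using join_in_D[OF D j True] .
    moreover have "\<forall>d\<in>D. cut_le p d j" using j unfolding is_join_def by blast
    ultimately show ?thesis using max_join[OF DT] by blast
  next
    case False
    have "j \<in> finite_trees \<Sigma> X" using j unfolding is_join_def by blast
    then have jF: "is_tree \<Sigma> X j" "finite (dom j)" unfolding finite_trees_def by auto
    obtain N where N: "\<forall>n\<ge>N. cut p n j = j" using finite_cut_id[OF jF] by blast
    obtain x k where x: "x \<in> D" "k \<ge> N" "lvl p D x k" using levels_unbounded[OF D False] by blast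
    have up: "\<forall>d\<in>D. cut_le p d j" using j unfolding is_join_def by blast
    then have "x = cut p k j" using L[OF x(3)] by blast
    then have "x = j" using N x(2) by simp
    then have "has_max p D" using x(1) up unfolding has_max_def by blast
    then show ?thesis using False by simp
  qed
qed

lemma joinQ_unique:
  assumes "partial_order_on' Q le" "is_join Q le A a" "is_join Q le A b" shows "a = b"
  using assms unfolding partial_order_on'_def is_join_def by blast

lemma chainQ:
  assumes p: "p \<in> nullary_labels \<Sigma> X"
    and f: "continuous_map (finite_trees \<Sigma> X) (cut_le p) Q leQ f"
    and s: "s \<in> trees \<Sigma> X"
  shows "directed Q leQ {f (cut p n s) | n. True}"
  unfolding directed_def
proof (intro conjI ballI)
  have cF: "\<And>n. cut p n s \<in> finite_trees \<Sigma> X" using cut_finite_tree[OF p s] .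
  then show "{f (cut p n s) |n. True} \<subseteq> Q" using cont_into[OF f] by blast
  show "{f (cut p n s) |n. True} \<noteq> {}" by blast
  fix a b assume "a \<in> {f (cut p n s) |n. True}" "b \<in> {f (cut p n s) |n. True}"
  then obtain n m where nm: "a = f (cut p n s)" "b = f (cut p m s)" by blast
  have "leQ a (f (cut p (max n m) s)) \<and> leQ b (f (cut p (max n m) s))"
    using cont_mono[OF f cF cF] cut_mono_n[of n "max n m" p s] cut_mono_n[of m "max n m" p s] nm
    by simp
  then show "\<exists>z\<in>{f (cut p n s) |n. True}. leQ a z \<and> leQ b z" by blast
qed

lemma cuts_join:
  assumes p: "p \<in> nullary_labels \<Sigma> X" and s: "s \<in> trees \<Sigma> X"
  shows "directed (trees \<Sigma> X) (cut_le p) {cut p n s | n. True}"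
    and "is_join (trees \<Sigma> X) (cut_le p) {cut p n s | n. True} s"
proof -
  let ?D = "{cut p n s | n. True}"
  have cT: "\<And>n. cut p n s \<in> trees \<Sigma> X" using cut_finite_tree[OF p s] F_sub_T by blast
  show D: "directed (trees \<Sigma> X) (cut_le p) ?D"
    unfolding directed_def
  proof (intro conjI ballI)
    show "?D \<subseteq> trees \<Sigma> X" using cT by blast
    show "?D \<noteq> {}" by blast
    fix a b assume "a \<in> ?D" "b \<in> ?D"
    then obtain n m where nm: "a = cut p n s" "b = cut p m s" by blast
    then show "\<exists>z\<in>?D. cut_le p a z \<and> cut_le p b z"
      using cut_mono_n[of n "max n m" p s] cut_mono_n[of m "max n m" p s] by auto
  qed
  have sT: "is_tree \<Sigma> X s" using s unfolding trees_def by simp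
  have up: "\<forall>d\<in>?D. cut_le p d s" using cut_le_cut by blast
  show "is_join (trees \<Sigma> X) (cut_le p) ?D s"
    unfolding is_join_def
  proof (intro conjI ballI impI)
    show "s \<in> trees \<Sigma> X" using s .
    show "\<And>x. x \<in> ?D \<Longrightarrow> cut_le p x s" using up by blast
    fix u assume u: "u \<in> trees \<Sigma> X" "\<forall>x\<in>?D. cut_le p x u"
    show "cut_le p s u"
    proof (cases "s \<in> ?D")
      case True then show ?thesis using u by blast
    next
      case False
      have nm: "\<not> has_max p ?D"
      proof
        assume "has_max p ?D"
        then obtain N where N: "\<forall>d\<in>?D. cut_le p d (cut p N s)" unfolding has_max_def by blast
        then have le: "cut_le p (cut p (Suc N) s) (cut p N s)" by blast
        have "\<exists>a<Suc N. cut p a s = cut p (Suc N) s"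
        proof (cases "cut p (Suc N) s = cut p N s")
          case True then show ?thesis by (intro exI[of _ N]) simp
        next
          case False
          then obtain k where "cut p (Suc N) s = cut p k (cut p N s)" using le unfolding cut_le_def by blast
          then have "cut p (Suc N) s = cut p (min k N) s" by (simp add: cut_cut)
          moreover have "min k N < Suc N" by simp
          ultimately show ?thesis by (intro exI[of _ "min k N"]) simp
        qed
        then obtain a where "a < Suc N" "cut p a s = cut p (Suc N) s" by blast
        then have "cut p (Suc N) s = s" using cut_unique[OF sT] by blast
        then have "s \<in> ?D" by (intro CollectI exI[of _ "Suc N"]) simp
        then show False using False by simp
      qed
      have "u = s" using upper_unique[OF D nm u(2) up] .
      then show ?thesis using cut_le_refl[of p s] by simp
    qed
  qed
qed

theorem mainTheorem3:
  fixes \<Sigma> :: "nat \<Rightarrow> 's set" and X :: "'x set" and p :: "('s, 'x) lab"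
  assumes "p \<in> nullary_labels \<Sigma> X"
  shows "cpo (trees \<Sigma> X) (cut_le p)
       \<and> finite_trees \<Sigma> X \<subseteq> trees \<Sigma> X
       \<and> closed_under_directed_joins (finite_trees \<Sigma> X) (trees \<Sigma> X) (cut_le p)
       \<and> (\<forall>(Q :: 'q set) leQ f.
            cpo Q leQ \<and> continuous_map (finite_trees \<Sigma> X) (cut_le p) Q leQ f \<longrightarrow>
              (\<exists>g. continuous_map (trees \<Sigma> X) (cut_le p) Q leQ g
                   \<and> (\<forall>s\<in>finite_trees \<Sigma> X. g s = f s)
                   \<and> (\<forall>s\<in>trees \<Sigma> X. is_join Q leQ {f (cut p n s) | n. True} (g s)))
            \<and> (\<forall>g g'. continuous_map (trees \<Sigma> X) (cut_le p) Q leQ g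
                   \<and> (\<forall>s\<in>finite_trees \<Sigma> X. g s = f s)
                   \<and> continuous_map (trees \<Sigma> X) (cut_le p) Q leQ g'
                   \<and> (\<forall>s\<in>finite_trees \<Sigma> X. g' s = f s)
                   \<longrightarrow> (\<forall>s\<in>trees \<Sigma> X. g s = g' s)))"
proof (intro conjI allI impI)
  show "cpo (trees \<Sigma> X) (cut_le p)" by (rule trees_cpo)
  show "finite_trees \<Sigma> X \<subseteq> trees \<Sigma> X" by (rule F_sub_T)
  show "closed_under_directed_joins (finite_trees \<Sigma> X) (trees \<Sigma> X) (cut_le p)" by (rule closure)
next
  fix Q :: "'q set" and leQ f
  assume a: "cpo Q leQ \<and> continuous_map (finite_trees \<Sigma> X) (cut_le p) Q leQ f"
  then have Q: "cpo Q leQ" and f: "continuous_map (finite_trees \<Sigma> X) (cut_le p) Q leQ f" by auto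
  have po: "partial_order_on' Q leQ" using Q unfolding cpo_def by blast
  have refl: "\<And>x. x \<in> Q \<Longrightarrow> leQ x x" using po unfolding partial_order_on'_def by blast
  have trans: "\<And>x y z. x \<in> Q \<Longrightarrow> y \<in> Q \<Longrightarrow> z \<in> Q \<Longrightarrow> leQ x y \<Longrightarrow> leQ y z \<Longrightarrow> leQ x z"
    using po unfolding partial_order_on'_def by blast
  have fQ: "\<And>s. s \<in> finite_trees \<Sigma> X \<Longrightarrow> f s \<in> Q" using cont_into[OF f] .
  have fmono: "\<And>s t. s \<in> finite_trees \<Sigma> X \<Longrightarrow> t \<in> finite_trees \<Sigma> X \<Longrightarrow> cut_le p s t \<Longrightarrow> leQ (f s) (f t)"
    using cont_mono[OF f] .
  have cF: "\<And>s n. s \<in> trees \<Sigma> X \<Longrightarrow> cut p n s \<in> finite_trees \<Sigma> X"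
    using cut_finite_tree[OF assms] by blast
  define g where "g s = (SOME j. is_join Q leQ {f (cut p n s) | n. True} j)" for s
  have gj: "is_join Q leQ {f (cut p n s) | n. True} (g s)" if s: "s \<in> trees \<Sigma> X" for s
  proof -
    have "\<exists>j. is_join Q leQ {f (cut p n s) | n. True} j"
      using Q chainQ[OF assms f s] unfolding cpo_def by blast
    then show ?thesis unfolding g_def by (rule someI_ex)
  qed
  have gQ: "\<And>s. s \<in> trees \<Sigma> X \<Longrightarrow> g s \<in> Q" using gj unfolding is_join_def by blast
  have gf: "g s = f s" if s: "s \<in> finite_trees \<Sigma> X" for s
  proof -
    have sT: "s \<in> trees \<Sigma> X" using s F_sub_T by blast
    obtain N where N: "\<forall>n\<ge>N. cut p n s = s"
      using finite_cut_id s unfolding finite_trees_def by blast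
    have "is_join Q leQ {f (cut p n s) | n. True} (f s)"
      unfolding is_join_def
    proof (intro conjI ballI impI)
      show "f s \<in> Q" using fQ[OF s] .
      fix x assume "x \<in> {f (cut p n s) | n. True}"
      then obtain n where "x = f (cut p n s)" by blast
      then show "leQ x (f s)" using fmono[OF cF[OF sT] s cut_le_cut] by simp
    next
      fix u assume "u \<in> Q" "\<forall>x\<in>{f (cut p n s) | n. True}. leQ x u"
      then have "leQ (f (cut p N s)) u" by blast
      then show "leQ (f s) u" using N by simp
    qed
    then show ?thesis using joinQ_unique[OF po gj[OF sT]] by blast
  qed
  have gmono: "leQ (g s) (g t)" if st: "s \<in> trees \<Sigma> X" "t \<in> trees \<Sigma> X" "cut_le p s t" for s t
  proof (cases "s = t")
    case True then show ?thesis using refl gQ st by simp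
  next
    case False
    then obtain m where m: "s = cut p m t" using st(3) unfolding cut_le_def by blast
    have "\<forall>y\<in>{f (cut p n s) | n. True}. leQ y (g t)"
    proof
      fix y assume "y \<in> {f (cut p n s) | n. True}"
      then obtain n where "y = f (cut p n s)" by blast
      then have "y = f (cut p (min n m) t)" using m by (simp add: cut_cut)
      then have "y \<in> {f (cut p n t) | n. True}" by blast
      then show "leQ y (g t)" using gj[OF st(2)] unfolding is_join_def by blast
    qed
    then show ?thesis using gj[OF st(1)] gQ[OF st(2)] unfolding is_join_def by blast
  qed
  have gcont: "continuous_map (trees \<Sigma> X) (cut_le p) Q leQ g"
    unfolding continuous_map_def
  proof (intro conjI allI impI ballI)
    show "g ` trees \<Sigma> X \<subseteq> Q" using gQ by blast
    show "\<And>x y. x \<in> trees \<Sigma> X \<Longrightarrow> y \<in> trees \<Sigma> X \<Longrightarrow> cut_le p x y \<Longrightarrow> leQ (g x) (g y)"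
      using gmono by blast
  next
    fix D j assume Dj: "directed (trees \<Sigma> X) (cut_le p) D \<and> is_join (trees \<Sigma> X) (cut_le p) D j"
    then have D: "directed (trees \<Sigma> X) (cut_le p) D" and j: "is_join (trees \<Sigma> X) (cut_le p) D j" by auto
    have DT: "D \<subseteq> trees \<Sigma> X" using D unfolding directed_def by blast
    have jT: "j \<in> trees \<Sigma> X" using j unfolding is_join_def by blast
    show "is_join Q leQ (g ` D) (g j)"
      unfolding is_join_def
    proof (intro conjI ballI impI)
      show "g j \<in> Q" using gQ[OF jT] .
      fix y assume "y \<in> g ` D"
      then obtain x where x: "x \<in> D" "y = g x" by blast
      have "cut_le p x j" using j x(1) unfolding is_join_def by blast
      then show "leQ y (g j)" using gmono x DT jT by blast
    next
      fix u assume u: "u \<in> Q" "\<forall>y\<in>g ` D. leQ y u"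
      have "\<forall>y\<in>{f (cut p n j) | n. True}. leQ y u"
      proof
        fix y assume "y \<in> {f (cut p n j) | n. True}"
        then obtain n where n: "y = f (cut p n j)" by blast
        obtain x where x: "x \<in> D" "cut p n j = cut p n x" using K[OF D j] by blast
        have xT: "x \<in> trees \<Sigma> X" using x(1) DT by blast
        have "leQ (f (cut p n x)) (g x)" using gj[OF xT] unfolding is_join_def by blast
        moreover have "leQ (g x) u" using u x(1) by blast
        ultimately have "leQ (f (cut p n x)) u"
          using trans[OF fQ[OF cF[OF xT]] gQ[OF xT] u(1)] by blast
        then show "leQ y u" using n x(2) by simp
      qed
      then show "leQ (g j) u" using gj[OF jT] u(1) unfolding is_join_def by blast
    qed
  qed
  show "\<exists>g. continuous_map (trees \<Sigma> X) (cut_le p) Q leQ g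
                   \<and> (\<forall>s\<in>finite_trees \<Sigma> X. g s = f s)
                   \<and> (\<forall>s\<in>trees \<Sigma> X. is_join Q leQ {f (cut p n s) | n. True} (g s))"
    using gcont gf gj by blast
next
  fix Q :: "'q set" and leQ f g g'
  assume a: "cpo Q leQ \<and> continuous_map (finite_trees \<Sigma> X) (cut_le p) Q leQ f"
  then have po: "partial_order_on' Q leQ" unfolding cpo_def by blast
  assume b: "continuous_map (trees \<Sigma> X) (cut_le p) Q leQ g
                   \<and> (\<forall>s\<in>finite_trees \<Sigma> X. g s = f s)
                   \<and> continuous_map (trees \<Sigma> X) (cut_le p) Q leQ g'
                   \<and> (\<forall>s\<in>finite_trees \<Sigma> X. g' s = f s)"
  show "\<forall>s\<in>trees \<Sigma> X. g s = g' s"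
  proof
    fix s assume s: "s \<in> trees \<Sigma> X"
    let ?D = "{cut p n s | n. True}"
    have D: "directed (trees \<Sigma> X) (cut_le p) ?D" and j: "is_join (trees \<Sigma> X) (cut_le p) ?D s"
      using cuts_join[OF assms s] by auto
    have gc: "continuous_map (trees \<Sigma> X) (cut_le p) Q leQ g"
      and gc': "continuous_map (trees \<Sigma> X) (cut_le p) Q leQ g'" using b by auto
    have "is_join Q leQ (g ` ?D) (g s)" using cont_join[OF gc D j] .
    moreover have "is_join Q leQ (g' ` ?D) (g' s)" using cont_join[OF gc' D j] .
    moreover have "g ` ?D = g' ` ?D"
    proof -
      have e1: "\<forall>s\<in>finite_trees \<Sigma> X. g s = f s" and e2: "\<forall>s\<in>finite_trees \<Sigma> X. g' s = f s"
        using b by auto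
      have ge: "\<forall>x\<in>?D. g x = g' x"
      proof
        fix x assume "x \<in> ?D"
        then obtain n where "x = cut p n s" by blast
        then have "x \<in> finite_trees \<Sigma> X" using cut_finite_tree[OF assms s] by simp
        then show "g x = g' x" using e1 e2 by simp
      qed
      show ?thesis
      proof (rule image_cong)
        fix x assume "x \<in> ?D"
        then show "g x = g' x" using ge by blast
      qed simp
    qed
    ultimately show "g s = g' s" using joinQ_unique[OF po] by simp
  qed
qed

end
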